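(* An integral domain $D$ is a $\ast$-wf-SH domain if and only if $D$ is a $\ast$-SH domain with trivial $\ast$-class group $Cl_\ast(D)=0$.
   Context: $\ast$ is a star operation on $D$ of finite character. A $\ast$-ideal is a nonzero fractional ideal $I$ with $I^\ast=I$; of finite type if $I=J^\ast$ for some nonzero finitely generated $J$. $I$ is $\ast$-invertible if $(II^{-1})^\ast=D$. $Cl_\ast(D)$ is the group of $\ast$-invertible fractional $\ast$-ideals under $(I,J)\mapsto (IJ)^\ast$ modulo the subgroup of nonzero principal fractional ideals. A $\ast$-homog ideal is a proper integral $\ast$-ideal $I$ of finite type such that $(A+B)^\ast\neq D$ for every pair $A,B$ of proper integral $\ast$-ideals of finite type containing $I$. $D$ is a $\ast$-SH domain if for every nonzero nonunit $x$, $xD$ is a $\ast$-product $(I_1\cdots I_n)^\ast$ of finitely many $\ast$-homog ideals. A $\ast$-wf-homog ideal is a $\ast$-homog ideal $I$ such that, if $I$ is $\ast$-invertible, then every $\ast$-invertible $\ast$-ideal containing $I$ is principal; a $\ast$-wf-homog element is a generator of a principal $\ast$-wf-homog ideal. $D$ is a $\ast$-wf-SH domain if every nonzero nonunit of $D$ is a finite product of $\ast$-wf-homog elements. *)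

theory Defs
  imports Main
begin

text \<open>Convention: the integral domain D is a subring of a field of type 'a which is
its quotient field K (every element of 'a is a quotient of elements of D).
Fractional ideals are subsets of 'a.\<close>

definition domain_with_qf :: "'a::field set \<Rightarrow> bool" where
  "domain_with_qf D \<longleftrightarrow> 0 \<in> D \<and> 1 \<in> D \<and>
     (\<forall>x\<in>D. \<forall>y\<in>D. x + y \<in> D \<and> x - y \<in> D \<and> x * y \<in> D) \<and>
     (\<forall>z. \<exists>a\<in>D. \<exists>b\<in>D. b \<noteq> 0 \<and> z = a / b)"

definition gen :: "'a::field set \<Rightarrow> 'a set \<Rightarrow> 'a set" where
  "gen D S = {(\<Sum>s\<in>F. f s * s) | F f. finite F \<and> F \<subseteq> S \<and> (\<forall>s\<in>F. f s \<in> D)}"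

definition is_submodule :: "'a::field set \<Rightarrow> 'a set \<Rightarrow> bool" where
  "is_submodule D I \<longleftrightarrow> 0 \<in> I \<and> (\<forall>x\<in>I. \<forall>y\<in>I. x + y \<in> I) \<and> (\<forall>d\<in>D. \<forall>x\<in>I. d * x \<in> I)"

definition frac_ideal :: "'a::field set \<Rightarrow> 'a set \<Rightarrow> bool" where
  "frac_ideal D I \<longleftrightarrow> is_submodule D I \<and> I \<noteq> {0} \<and>
     (\<exists>d\<in>D. d \<noteq> 0 \<and> (\<forall>x\<in>I. d * x \<in> D))"

definition fin_gen :: "'a::field set \<Rightarrow> 'a set \<Rightarrow> bool" where
  "fin_gen D I \<longleftrightarrow> (\<exists>F. finite F \<and> I = gen D F)"

definition principal :: "'a::field set \<Rightarrow> 'a \<Rightarrow> 'a set" where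
  "principal D x = {x * d | d. d \<in> D}"

definition smult_set :: "'a::field \<Rightarrow> 'a set \<Rightarrow> 'a set" where
  "smult_set x I = (\<lambda>y. x * y) ` I"

definition ideal_mult :: "'a::field set \<Rightarrow> 'a set \<Rightarrow> 'a set \<Rightarrow> 'a set" where
  "ideal_mult D I J = gen D {x * y | x y. x \<in> I \<and> y \<in> J}"

definition ideal_add :: "'a::field set \<Rightarrow> 'a set \<Rightarrow> 'a set \<Rightarrow> 'a set" where
  "ideal_add D I J = gen D (I \<union> J)"

definition ideal_prod_list :: "'a::field set \<Rightarrow> 'a set list \<Rightarrow> 'a set" where
  "ideal_prod_list D Is = foldr (ideal_mult D) Is D"

definition frac_inverse :: "'a::field set \<Rightarrow> 'a set \<Rightarrow> 'a set" where
  "frac_inverse D I = {x. \<forall>y\<in>I. x * y \<in> D}"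

definition star_op :: "'a::field set \<Rightarrow> ('a set \<Rightarrow> 'a set) \<Rightarrow> bool" where
  "star_op D st \<longleftrightarrow>
     (\<forall>I. frac_ideal D I \<longrightarrow> frac_ideal D (st I)) \<and>
     (\<forall>x. x \<noteq> 0 \<longrightarrow> st (principal D x) = principal D x) \<and>
     (\<forall>x I. x \<noteq> 0 \<longrightarrow> frac_ideal D I \<longrightarrow> st (smult_set x I) = smult_set x (st I)) \<and>
     (\<forall>I. frac_ideal D I \<longrightarrow> I \<subseteq> st I) \<and>
     (\<forall>I J. frac_ideal D I \<longrightarrow> frac_ideal D J \<longrightarrow> I \<subseteq> J \<longrightarrow> st I \<subseteq> st J) \<and>
     (\<forall>I. frac_ideal D I \<longrightarrow> st (st I) = st I)"

definition finite_character :: "'a::field set \<Rightarrow> ('a set \<Rightarrow> 'a set) \<Rightarrow> bool" where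
  "finite_character D st \<longleftrightarrow>
     (\<forall>I. frac_ideal D I \<longrightarrow>
        st I = \<Union>{st J | J. frac_ideal D J \<and> fin_gen D J \<and> J \<subseteq> I})"

definition star_ideal :: "'a::field set \<Rightarrow> ('a set \<Rightarrow> 'a set) \<Rightarrow> 'a set \<Rightarrow> bool" where
  "star_ideal D st I \<longleftrightarrow> frac_ideal D I \<and> st I = I"

definition finite_type :: "'a::field set \<Rightarrow> ('a set \<Rightarrow> 'a set) \<Rightarrow> 'a set \<Rightarrow> bool" where
  "finite_type D st I \<longleftrightarrow> (\<exists>J. frac_ideal D J \<and> fin_gen D J \<and> I = st J)"

definition star_invertible :: "'a::field set \<Rightarrow> ('a set \<Rightarrow> 'a set) \<Rightarrow> 'a set \<Rightarrow> bool" where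
  "star_invertible D st I \<longleftrightarrow> st (ideal_mult D I (frac_inverse D I)) = D"

definition is_principal :: "'a::field set \<Rightarrow> 'a set \<Rightarrow> bool" where
  "is_principal D I \<longleftrightarrow> (\<exists>x. x \<noteq> 0 \<and> I = principal D x)"

text \<open>Cl_*(D) = 0: the group of *-invertible fractional *-ideals modulo the subgroup of
nonzero principal fractional ideals is trivial, i.e. every *-invertible *-ideal is principal.\<close>
definition star_class_group_trivial :: "'a::field set \<Rightarrow> ('a set \<Rightarrow> 'a set) \<Rightarrow> bool" where
  "star_class_group_trivial D st \<longleftrightarrow>
     (\<forall>I. star_ideal D st I \<and> star_invertible D st I \<longrightarrow> is_principal D I)"

definition pift :: "'a::field set \<Rightarrow> ('a set \<Rightarrow> 'a set) \<Rightarrow> 'a set \<Rightarrow> bool" where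
  "pift D st I \<longleftrightarrow> star_ideal D st I \<and> I \<subseteq> D \<and> I \<noteq> D \<and> finite_type D st I"

definition star_homog :: "'a::field set \<Rightarrow> ('a set \<Rightarrow> 'a set) \<Rightarrow> 'a set \<Rightarrow> bool" where
  "star_homog D st I \<longleftrightarrow> pift D st I \<and>
     (\<forall>A B. pift D st A \<longrightarrow> pift D st B \<longrightarrow> I \<subseteq> A \<longrightarrow> I \<subseteq> B \<longrightarrow>
        st (ideal_add D A B) \<noteq> D)"

definition is_unit_in :: "'a::field set \<Rightarrow> 'a \<Rightarrow> bool" where
  "is_unit_in D x \<longleftrightarrow> (\<exists>y\<in>D. x * y = 1)"

definition star_SH :: "'a::field set \<Rightarrow> ('a set \<Rightarrow> 'a set) \<Rightarrow> bool" where
  "star_SH D st \<longleftrightarrow> (\<forall>x\<in>D. x \<noteq> 0 \<longrightarrow> \<not> is_unit_in D x \<longrightarrow>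
     (\<exists>Is. (\<forall>I\<in>set Is. star_homog D st I) \<and> principal D x = st (ideal_prod_list D Is)))"

definition star_wf_homog :: "'a::field set \<Rightarrow> ('a set \<Rightarrow> 'a set) \<Rightarrow> 'a set \<Rightarrow> bool" where
  "star_wf_homog D st I \<longleftrightarrow> star_homog D st I \<and>
     (star_invertible D st I \<longrightarrow>
        (\<forall>J. star_ideal D st J \<longrightarrow> star_invertible D st J \<longrightarrow> I \<subseteq> J \<longrightarrow> is_principal D J))"

definition star_wf_homog_elem :: "'a::field set \<Rightarrow> ('a set \<Rightarrow> 'a set) \<Rightarrow> 'a \<Rightarrow> bool" where
  "star_wf_homog_elem D st x \<longleftrightarrow> star_wf_homog D st (principal D x)"

definition star_wf_SH :: "'a::field set \<Rightarrow> ('a set \<Rightarrow> 'a set) \<Rightarrow> bool" where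
  "star_wf_SH D st \<longleftrightarrow> (\<forall>x\<in>D. x \<noteq> 0 \<longrightarrow> \<not> is_unit_in D x \<longrightarrow>
     (\<exists>xs. (\<forall>y\<in>set xs. y \<in> D \<and> star_wf_homog_elem D st y) \<and> x = prod_list xs))"

end

theory Submission imports Defs begin

lemma dq:
  assumes "domain_with_qf D"
  shows "0 \<in> D" "1 \<in> D" "\<And>x y. x \<in> D \<Longrightarrow> y \<in> D \<Longrightarrow> x + y \<in> D"
    "\<And>x y. x \<in> D \<Longrightarrow> y \<in> D \<Longrightarrow> x - y \<in> D"
    "\<And>x y. x \<in> D \<Longrightarrow> y \<in> D \<Longrightarrow> x * y \<in> D"
    "\<And>z. \<exists>a\<in>D. \<exists>b\<in>D. b \<noteq> 0 \<and> z = a / b"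
  using assms unfolding domain_with_qf_def by auto

lemma sumD:
  assumes "domain_with_qf D" "finite F" "\<forall>s\<in>F. g s \<in> D"
  shows "sum g F \<in> D"
  using assms(2,3)
proof (induction F rule: finite_induct)
  case empty then show ?case using dq[OF assms(1)] by simp
next
  case (insert a F) then show ?case using dq[OF assms(1)] by simp
qed

lemma gen_sub:
  assumes "domain_with_qf D"
  shows "is_submodule D (gen D S)"
  unfolding is_submodule_def
proof (intro conjI ballI)
  show "0 \<in> gen D S" unfolding gen_def by (rule CollectI, rule exI[of _ "{}"]) auto
next
  fix x y assume "x \<in> gen D S" "y \<in> gen D S"
  then obtain F f G g where F: "finite F" "F \<subseteq> S" "\<forall>s\<in>F. f s \<in> D" "x = (\<Sum>s\<in>F. f s * s)"
    and G: "finite G" "G \<subseteq> S" "\<forall>s\<in>G. g s \<in> D" "y = (\<Sum>s\<in>G. g s * s)"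
    unfolding gen_def by blast
  define h where "h s = (if s \<in> F then f s else 0) + (if s \<in> G then g s else 0)" for s
  have "(\<Sum>s\<in>F\<union>G. h s * s) = (\<Sum>s\<in>F\<union>G. (if s \<in> F then f s else 0) * s) + (\<Sum>s\<in>F\<union>G. (if s \<in> G then g s else 0) * s)"
    unfolding h_def by (simp add: distrib_right sum.distrib)
  also have "(\<Sum>s\<in>F\<union>G. (if s \<in> F then f s else 0) * s) = x"
    unfolding F(4) by (rule sum.mono_neutral_cong_right) (use F(1) G(1) in auto)
  also have "(\<Sum>s\<in>F\<union>G. (if s \<in> G then g s else 0) * s) = y"
    unfolding G(4) by (rule sum.mono_neutral_cong_right) (use F(1) G(1) in auto)
  finally have e: "x + y = (\<Sum>s\<in>F\<union>G. h s * s)" by simp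
  have "\<forall>s\<in>F\<union>G. h s \<in> D" unfolding h_def using F G dq[OF assms] by auto
  then show "x + y \<in> gen D S" unfolding gen_def using e F G by blast
next
  fix d x assume d: "d \<in> D" and "x \<in> gen D S"
  then obtain F f where F: "finite F" "F \<subseteq> S" "\<forall>s\<in>F. f s \<in> D" "x = (\<Sum>s\<in>F. f s * s)"
    unfolding gen_def by blast
  have "d * x = (\<Sum>s\<in>F. (d * f s) * s)" using F(4) by (simp add: sum_distrib_left mult.assoc)
  moreover have "\<forall>s\<in>F. d * f s \<in> D" using F d dq[OF assms] by auto
  ultimately show "d * x \<in> gen D S" unfolding gen_def
    by (intro CollectI exI[of _ F] exI[of _ "\<lambda>s. d * f s"]) (use F in auto)
qed

lemma gen_sup:
  assumes "domain_with_qf D"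
  shows "S \<subseteq> gen D S"
proof
  fix s assume "s \<in> S"
  then show "s \<in> gen D S" unfolding gen_def using dq[OF assms]
    by (intro CollectI exI[of _ "{s}"] exI[of _ "\<lambda>_. 1"]) auto
qed

lemma gen_min:
  assumes "domain_with_qf D" "is_submodule D T" "S \<subseteq> T"
  shows "gen D S \<subseteq> T"
proof
  fix x assume "x \<in> gen D S"
  then obtain F f where F: "finite F" "F \<subseteq> S" "\<forall>s\<in>F. f s \<in> D" "x = (\<Sum>s\<in>F. f s * s)"
    unfolding gen_def by blast
  have "F \<subseteq> S \<longrightarrow> (\<forall>s\<in>F. f s \<in> D) \<longrightarrow> (\<Sum>s\<in>F. f s * s) \<in> T"
    using F(1)
  proof (induction F rule: finite_induct)
    case empty then show ?case using assms(2) unfolding is_submodule_def by simp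
  next
    case (insert a F) then show ?case using assms(2,3) unfolding is_submodule_def by auto
  qed
  then show "x \<in> T" using F by auto
qed

lemma gen_mono:
  assumes "S \<subseteq> S'" shows "gen D S \<subseteq> gen D S'"
proof
  fix x assume "x \<in> gen D S"
  then obtain F f where F: "finite F" "F \<subseteq> S" "\<forall>s\<in>F. f s \<in> D" "x = (\<Sum>s\<in>F. f s * s)"
    unfolding gen_def by blast
  then show "x \<in> gen D S'" unfolding gen_def using assms
    by (intro CollectI exI[of _ F] exI[of _ f]) auto
qed

lemma sub_D: "domain_with_qf D \<Longrightarrow> is_submodule D D"
  unfolding is_submodule_def domain_with_qf_def by simp

lemma gen_id: "domain_with_qf D \<Longrightarrow> is_submodule D T \<Longrightarrow> gen D T = T"
  using gen_min gen_sup by blast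

lemma sub_pre: "is_submodule D T \<Longrightarrow> is_submodule D {z. c * z \<in> T}"
  unfolding is_submodule_def by (simp add: distrib_left mult.left_commute)

lemma sub_pre2: "is_submodule D T \<Longrightarrow> is_submodule D {z. z * c \<in> T}"
  unfolding is_submodule_def by (simp add: distrib_right mult.assoc)

lemma principal_sub:
  assumes a: "domain_with_qf D"
  shows "is_submodule D (principal D y)"
  unfolding is_submodule_def
proof (intro conjI ballI)
  show "0 \<in> principal D y" unfolding principal_def using dq(1)[OF a] by force
next
  fix u v assume "u \<in> principal D y" "v \<in> principal D y"
  then obtain d1 d2 where "d1 \<in> D" "d2 \<in> D" "u = y * d1" "v = y * d2" unfolding principal_def by blast
  then have "u + v = y * (d1 + d2)" "d1 + d2 \<in> D" using dq(3)[OF a] by (auto simp: distrib_left)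
  then show "u + v \<in> principal D y" unfolding principal_def by blast
next
  fix d u assume "d \<in> D" "u \<in> principal D y"
  then obtain e where "e \<in> D" "u = y * e" unfolding principal_def by blast
  then have "d * u = y * (d * e)" "d * e \<in> D" using dq(5)[OF a] \<open>d \<in> D\<close> by (auto simp: mult.left_commute)
  then show "d * u \<in> principal D y" unfolding principal_def by blast
qed

lemma principal_1: "principal D 1 = D"
  unfolding principal_def by simp

lemma principal_mem: "domain_with_qf D \<Longrightarrow> y \<in> principal D y"
  unfolding principal_def using dq(2) by force

lemma fi_principal:
  assumes "domain_with_qf D" "y \<noteq> 0"
  shows "frac_ideal D (principal D y)"
proof -
  obtain a b where ab: "a \<in> D" "b \<in> D" "b \<noteq> 0" "y = a / b" using dq(6)[OF assms(1)] by blast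
  have "\<forall>x\<in>principal D y. b * x \<in> D"
  proof
    fix x assume "x \<in> principal D y"
    then obtain d where d: "d \<in> D" "x = y * d" unfolding principal_def by blast
    then have "b * x = a * d" using ab(3,4) by simp
    then show "b * x \<in> D" using dq(5)[OF assms(1) ab(1) d(1)] by simp
  qed
  moreover have "principal D y \<noteq> {0}" using principal_mem[OF assms(1)] assms(2) by blast
  ultimately show ?thesis unfolding frac_ideal_def using principal_sub[OF assms(1)] ab by blast
qed

lemma fin_gen_principal: "domain_with_qf D \<Longrightarrow> fin_gen D (principal D y)"
  unfolding fin_gen_def
proof (intro exI conjI)
  assume a: "domain_with_qf D"
  show "finite {y}" by simp
  show "principal D y = gen D {y}"
  proof
    show "principal D y \<subseteq> gen D {y}"
    proof
      fix z assume "z \<in> principal D y"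
      then obtain d where d: "d \<in> D" "z = y * d" unfolding principal_def by blast
      have "y \<in> gen D {y}" using gen_sup[OF a, of "{y}"] by blast
      then have "d * y \<in> gen D {y}" using gen_sub[OF a, of "{y}"] d(1) unfolding is_submodule_def by blast
      then show "z \<in> gen D {y}" using d(2) by (simp add: mult.commute)
    qed
    show "gen D {y} \<subseteq> principal D y"
      by (rule gen_min[OF a principal_sub[OF a]]) (use principal_mem[OF a] in auto)
  qed
qed


lemma smult_sub: "is_submodule D T \<Longrightarrow> is_submodule D (smult_set c T)"
  unfolding is_submodule_def smult_set_def
  by (auto simp: distrib_left[symmetric] mult.left_commute image_iff)

lemma smult_smult: "smult_set a (smult_set b T) = smult_set (a * b) T"
  unfolding smult_set_def by (auto simp: image_image mult.assoc)

lemma smult_1: "smult_set 1 T = T"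
  unfolding smult_set_def by simp

lemma smult_principal: "smult_set c (principal D y) = principal D (c * y)"
  unfolding smult_set_def principal_def by (auto simp: mult.assoc)

lemma fi_smult:
  assumes "domain_with_qf D" "frac_ideal D I" "c \<noteq> 0"
  shows "frac_ideal D (smult_set c I)"
proof -
  obtain d where d: "d \<in> D" "d \<noteq> 0" "\<forall>x\<in>I. d * x \<in> D" using assms(2) unfolding frac_ideal_def by blast
  obtain a b where ab: "a \<in> D" "b \<in> D" "b \<noteq> 0" "c = a / b" using dq(6)[OF assms(1)] by blast
  have "\<forall>x\<in>smult_set c I. (b * d) * x \<in> D"
  proof
    fix x assume "x \<in> smult_set c I"
    then obtain i where i: "i \<in> I" "x = c * i" unfolding smult_set_def by blast
    have e: "(b * d) * x = a * (d * i)" using ab(3,4) i(2) by (simp add: field_simps)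
    have "d * i \<in> D" using d(3) i(1) by blast
    then have "a * (d * i) \<in> D" using dq(5)[OF assms(1) ab(1)] by blast
    then show "(b * d) * x \<in> D" by (simp only: e)
  qed
  moreover have "smult_set c I \<noteq> {0}"
  proof
    assume h: "smult_set c I = {0}"
    have "I \<subseteq> {0}"
    proof
      fix i assume "i \<in> I"
      then have "c * i \<in> smult_set c I" unfolding smult_set_def by blast
      then show "i \<in> {0}" using h assms(3) by auto
    qed
    moreover have "0 \<in> I" using assms(2) unfolding frac_ideal_def is_submodule_def by blast
    ultimately show False using assms(2) unfolding frac_ideal_def by blast
  qed
  moreover have "b * d \<in> D" "b * d \<noteq> 0" using ab d dq[OF assms(1)] by auto
  ultimately show ?thesis unfolding frac_ideal_def
    using smult_sub assms(2) unfolding frac_ideal_def by blast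
qed

lemma fi_D: "domain_with_qf D \<Longrightarrow> frac_ideal D D"
  by (metis fi_principal principal_1 one_neq_zero)

lemma fi_nz: "frac_ideal D I \<Longrightarrow> \<exists>a\<in>I. a \<noteq> 0"
  unfolding frac_ideal_def is_submodule_def by blast

lemma fi_inv:
  assumes "domain_with_qf D" "frac_ideal D I"
  shows "frac_ideal D (frac_inverse D I)"
proof -
  obtain d where d: "d \<in> D" "d \<noteq> 0" "\<forall>x\<in>I. d * x \<in> D" using assms(2) unfolding frac_ideal_def by blast
  obtain a where a: "a \<in> I" "a \<noteq> 0" using fi_nz[OF assms(2)] by blast
  obtain p q where pq: "p \<in> D" "q \<in> D" "q \<noteq> 0" "a = p / q" using dq(6)[OF assms(1)] by blast
  have pI: "q * a \<in> I" using a pq assms(2) unfolding frac_ideal_def is_submodule_def by blast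
  have qa: "q * a \<noteq> 0" using pq a by simp
  have sub: "is_submodule D (frac_inverse D I)"
    unfolding is_submodule_def frac_inverse_def
    using dq[OF assms(1)] by (auto simp: distrib_right mult.assoc)
  have "d \<in> frac_inverse D I" unfolding frac_inverse_def using d by simp
  then have "frac_inverse D I \<noteq> {0}" using d by blast
  moreover have "\<forall>x\<in>frac_inverse D I. (q * a) * x \<in> D"
    using pI unfolding frac_inverse_def by (auto simp: mult.commute)
  moreover have "q * a \<in> D" using pq dq[OF assms(1)] pq(4) pq(3) by simp
  ultimately show ?thesis unfolding frac_ideal_def using sub qa by blast
qed

lemma gens_mult_sub:
  assumes "domain_with_qf D" "is_submodule D T" "\<forall>a\<in>A. \<forall>b\<in>B. a * b \<in> T"
  shows "ideal_mult D A B \<subseteq> T"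
  unfolding ideal_mult_def
proof (rule gen_min[OF assms(1,2)])
  show "{x * y |x y. x \<in> A \<and> y \<in> B} \<subseteq> T" using assms(3) by force
qed

lemma im_mem: "domain_with_qf D \<Longrightarrow> a \<in> A \<Longrightarrow> b \<in> B \<Longrightarrow> a * b \<in> ideal_mult D A B"
proof -
  assume "domain_with_qf D" "a \<in> A" "b \<in> B"
  then have "a * b \<in> {x * y |x y. x \<in> A \<and> y \<in> B}"
    by (intro CollectI exI[of _ a] exI[of _ b]) simp
  then show ?thesis unfolding ideal_mult_def by (rule subsetD[OF gen_sup[OF \<open>domain_with_qf D\<close>]])
qed

lemma im_sub: "domain_with_qf D \<Longrightarrow> is_submodule D (ideal_mult D A B)"
  unfolding ideal_mult_def by (rule gen_sub)

lemma im_comm: "ideal_mult D A B = ideal_mult D B A"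
proof -
  have "{x * y |x y. x \<in> A \<and> y \<in> B} = {x * y |x y. x \<in> B \<and> y \<in> A}"
  proof (intro set_eqI iffI)
    fix z assume "z \<in> {x * y |x y. x \<in> A \<and> y \<in> B}"
    then obtain x y where "x \<in> A" "y \<in> B" "z = x * y" by blast
    then show "z \<in> {x * y |x y. x \<in> B \<and> y \<in> A}"
      by (intro CollectI exI[of _ y] exI[of _ x]) (simp add: mult.commute)
  next
    fix z assume "z \<in> {x * y |x y. x \<in> B \<and> y \<in> A}"
    then obtain x y where "x \<in> B" "y \<in> A" "z = x * y" by blast
    then show "z \<in> {x * y |x y. x \<in> A \<and> y \<in> B}"
      by (intro CollectI exI[of _ y] exI[of _ x]) (simp add: mult.commute)
  qed
  then show ?thesis unfolding ideal_mult_def by simp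
qed

lemma im_assoc1:
  assumes "domain_with_qf D"
  shows "ideal_mult D (ideal_mult D A B) C \<subseteq> ideal_mult D A (ideal_mult D B C)"
proof (rule gens_mult_sub[OF assms im_sub[OF assms]], intro ballI)
  fix x z assume x: "x \<in> ideal_mult D A B" and z: "z \<in> C"
  have "ideal_mult D A B \<subseteq> {x. x * z \<in> ideal_mult D A (ideal_mult D B C)}"
  proof (rule gens_mult_sub[OF assms sub_pre2[OF im_sub[OF assms]]], intro ballI)
    fix a b assume "a \<in> A" "b \<in> B"
    then have "a * (b * z) \<in> ideal_mult D A (ideal_mult D B C)"
      using im_mem[OF assms \<open>a \<in> A\<close> im_mem[OF assms \<open>b \<in> B\<close> z]] by simp
    then show "a * b \<in> {x. x * z \<in> ideal_mult D A (ideal_mult D B C)}" by (simp add: mult.assoc)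
  qed
  from subsetD[OF this x] show "x * z \<in> ideal_mult D A (ideal_mult D B C)" by simp
qed

lemma im_assoc:
  assumes "domain_with_qf D"
  shows "ideal_mult D (ideal_mult D A B) C = ideal_mult D A (ideal_mult D B C)"
proof
  show "ideal_mult D (ideal_mult D A B) C \<subseteq> ideal_mult D A (ideal_mult D B C)" by (rule im_assoc1[OF assms])
  have "ideal_mult D A (ideal_mult D B C) = ideal_mult D (ideal_mult D C B) A" using im_comm[of D A "ideal_mult D B C"] im_comm[of D B C] by argo
  also have "\<dots> \<subseteq> ideal_mult D C (ideal_mult D B A)" by (rule im_assoc1[OF assms])
  also have "\<dots> = ideal_mult D (ideal_mult D A B) C" using im_comm[of D C "ideal_mult D B A"] im_comm[of D B A] im_comm[of D "ideal_mult D A B" C] by argo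
  finally show "ideal_mult D A (ideal_mult D B C) \<subseteq> ideal_mult D (ideal_mult D A B) C" .
qed

lemma fi_mult:
  assumes "domain_with_qf D" "frac_ideal D I" "frac_ideal D J"
  shows "frac_ideal D (ideal_mult D I J)"
proof -
  obtain d where d: "d \<in> D" "d \<noteq> 0" "\<forall>x\<in>I. d * x \<in> D" using assms(2) unfolding frac_ideal_def by blast
  obtain e where e: "e \<in> D" "e \<noteq> 0" "\<forall>x\<in>J. e * x \<in> D" using assms(3) unfolding frac_ideal_def by blast
  obtain a where a: "a \<in> I" "a \<noteq> 0" using fi_nz[OF assms(2)] by blast
  obtain b where b: "b \<in> J" "b \<noteq> 0" using fi_nz[OF assms(3)] by blast
  have ab: "a * b \<in> ideal_mult D I J" using im_mem[OF assms(1) a(1) b(1)] .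
  have nz: "ideal_mult D I J \<noteq> {0}"
  proof
    assume "ideal_mult D I J = {0}"
    then have "a * b = 0" using ab by simp
    then show False using a b by simp
  qed
  have sub: "ideal_mult D I J \<subseteq> {z. (d * e) * z \<in> D}"
  proof (rule gens_mult_sub[OF assms(1) sub_pre[OF sub_D[OF assms(1)]]], intro ballI)
    fix x y assume xy: "x \<in> I" "y \<in> J"
    have "d * x \<in> D" using d(3) xy(1) by blast
    moreover have "e * y \<in> D" using e(3) xy(2) by blast
    ultimately have "(d * x) * (e * y) \<in> D" by (rule dq(5)[OF assms(1)])
    then show "x * y \<in> {z. d * e * z \<in> D}" by (simp add: ac_simps)
  qed
  have de: "d * e \<in> D" "d * e \<noteq> 0" using dq(5)[OF assms(1) d(1) e(1)] d(2) e(2) by auto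
  have "\<forall>x\<in>ideal_mult D I J. (d * e) * x \<in> D" using sub by auto
  then show ?thesis unfolding frac_ideal_def using im_sub[OF assms(1)] nz de by blast
qed

lemma im_principal:
  assumes "domain_with_qf D"
  shows "ideal_mult D (principal D a) (principal D b) = principal D (a * b)"
proof
  show "ideal_mult D (principal D a) (principal D b) \<subseteq> principal D (a * b)"
    by (rule gens_mult_sub[OF assms principal_sub[OF assms]])
       (auto simp: principal_def ac_simps intro: dq(5)[OF assms])
  show "principal D (a * b) \<subseteq> ideal_mult D (principal D a) (principal D b)"
  proof
    fix z assume "z \<in> principal D (a * b)"
    then obtain d where d: "d \<in> D" "z = a * b * d" unfolding principal_def by blast
    have "a * d \<in> principal D a" "b \<in> principal D b" using d principal_mem[OF assms] unfolding principal_def by auto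
    then have "(a * d) * b \<in> ideal_mult D (principal D a) (principal D b)" by (rule im_mem[OF assms])
    then show "z \<in> ideal_mult D (principal D a) (principal D b)" using d by (simp add: ac_simps)
  qed
qed

lemma prod_principal:
  assumes "domain_with_qf D"
  shows "ideal_prod_list D (map (principal D) xs) = principal D (prod_list xs)"
  by (induction xs) (auto simp: ideal_prod_list_def principal_1 im_principal[OF assms])


lemma st_parts:
  assumes "star_op D st"
  shows "\<And>I. frac_ideal D I \<Longrightarrow> frac_ideal D (st I)"
    "\<And>x. x \<noteq> 0 \<Longrightarrow> st (principal D x) = principal D x"
    "\<And>x I. x \<noteq> 0 \<Longrightarrow> frac_ideal D I \<Longrightarrow> st (smult_set x I) = smult_set x (st I)"
    "\<And>I. frac_ideal D I \<Longrightarrow> I \<subseteq> st I"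
    "\<And>I J. frac_ideal D I \<Longrightarrow> frac_ideal D J \<Longrightarrow> I \<subseteq> J \<Longrightarrow> st I \<subseteq> st J"
    "\<And>I. frac_ideal D I \<Longrightarrow> st (st I) = st I"
proof -
  note h = assms[unfolded star_op_def]
  show "\<And>I. frac_ideal D I \<Longrightarrow> frac_ideal D (st I)" using h by (elim conjE) (rule mp, erule spec)
  show "\<And>x. x \<noteq> 0 \<Longrightarrow> st (principal D x) = principal D x" using h by (elim conjE) (rule mp, erule spec)
  show "\<And>x I. x \<noteq> 0 \<Longrightarrow> frac_ideal D I \<Longrightarrow> st (smult_set x I) = smult_set x (st I)"
    using h by (elim conjE) (drule spec, drule spec, erule mp[THEN mp])
  show "\<And>I. frac_ideal D I \<Longrightarrow> I \<subseteq> st I" using h by (elim conjE) (rule mp, erule spec)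
  show "\<And>I J. frac_ideal D I \<Longrightarrow> frac_ideal D J \<Longrightarrow> I \<subseteq> J \<Longrightarrow> st I \<subseteq> st J"
    using h by (elim conjE) (drule spec, drule spec, erule mp[THEN mp, THEN mp])
  show "\<And>I. frac_ideal D I \<Longrightarrow> st (st I) = st I" using h by (elim conjE) (rule mp, erule spec)
qed

lemma st_fi: "star_op D st \<Longrightarrow> frac_ideal D I \<Longrightarrow> frac_ideal D (st I)"
  by (rule st_parts(1))
lemma st_principal: "star_op D st \<Longrightarrow> x \<noteq> 0 \<Longrightarrow> st (principal D x) = principal D x"
  by (rule st_parts(2))
lemma st_smult: "star_op D st \<Longrightarrow> x \<noteq> 0 \<Longrightarrow> frac_ideal D I \<Longrightarrow> st (smult_set x I) = smult_set x (st I)"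
  by (rule st_parts(3))
lemma st_ext: "star_op D st \<Longrightarrow> frac_ideal D I \<Longrightarrow> I \<subseteq> st I"
  by (rule st_parts(4))
lemma st_mono: "star_op D st \<Longrightarrow> frac_ideal D I \<Longrightarrow> frac_ideal D J \<Longrightarrow> I \<subseteq> J \<Longrightarrow> st I \<subseteq> st J"
  by (rule st_parts(5))
lemma st_D: "star_op D st \<Longrightarrow> st D = D"
  using st_principal[of D st 1] principal_1[of D] by simp

lemma principal_inv:
  assumes "domain_with_qf D" "y \<noteq> 0"
  shows "frac_inverse D (principal D y) = principal D (1 / y)"
proof
  show "frac_inverse D (principal D y) \<subseteq> principal D (1 / y)"
  proof
    fix x assume "x \<in> frac_inverse D (principal D y)"
    then have "x * y \<in> D" using principal_mem[OF assms(1)] unfolding frac_inverse_def by blast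
    moreover have "x = (1 / y) * (x * y)" using assms(2) by simp
    ultimately show "x \<in> principal D (1 / y)" unfolding principal_def by blast
  qed
  show "principal D (1 / y) \<subseteq> frac_inverse D (principal D y)"
  proof
    fix x assume "x \<in> principal D (1 / y)"
    then obtain e where e: "e \<in> D" "x = (1 / y) * e" unfolding principal_def by blast
    show "x \<in> frac_inverse D (principal D y)" unfolding frac_inverse_def
    proof (rule CollectI, rule ballI)
      fix z assume "z \<in> principal D y"
      then obtain d where d: "d \<in> D" "z = y * d" unfolding principal_def by blast
      have "x * z = e * d" using e(2) d(2) assms(2) by simp
      then show "x * z \<in> D" using dq(5)[OF assms(1) e(1) d(1)] by simp
    qed
  qed
qed

lemma inv_principal:
  assumes "domain_with_qf D" "star_op D st" "y \<noteq> 0"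
  shows "star_invertible D st (principal D y)"
  unfolding star_invertible_def principal_inv[OF assms(1,3)] im_principal[OF assms(1)]
  using assms(3) st_D[OF assms(2)] principal_1[of D] by simp

lemma smult_inv:
  assumes "c \<noteq> 0"
  shows "frac_inverse D (smult_set c I) = smult_set (1 / c) (frac_inverse D I)"
proof
  show "frac_inverse D (smult_set c I) \<subseteq> smult_set (1 / c) (frac_inverse D I)"
  proof
    fix x assume x: "x \<in> frac_inverse D (smult_set c I)"
    have "c * x \<in> frac_inverse D I" unfolding frac_inverse_def
    proof (rule CollectI, rule ballI)
      fix i assume "i \<in> I"
      then have "c * i \<in> smult_set c I" unfolding smult_set_def by blast
      then have "x * (c * i) \<in> D" using x unfolding frac_inverse_def by blast
      then show "c * x * i \<in> D" by (simp add: ac_simps)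
    qed
    moreover have "x = (1 / c) * (c * x)" using assms by simp
    ultimately show "x \<in> smult_set (1 / c) (frac_inverse D I)" unfolding smult_set_def by blast
  qed
  show "smult_set (1 / c) (frac_inverse D I) \<subseteq> frac_inverse D (smult_set c I)"
  proof
    fix x assume "x \<in> smult_set (1 / c) (frac_inverse D I)"
    then obtain u where u: "u \<in> frac_inverse D I" "x = (1 / c) * u" unfolding smult_set_def by blast
    show "x \<in> frac_inverse D (smult_set c I)" unfolding frac_inverse_def
    proof (rule CollectI, rule ballI)
      fix z assume "z \<in> smult_set c I"
      then obtain i where i: "i \<in> I" "z = c * i" unfolding smult_set_def by blast
      have "x * z = u * i" using u(2) i(2) assms by simp
      then show "x * z \<in> D" using u(1) i(1) unfolding frac_inverse_def by simp
    qed
  qed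
qed

lemma im_smult_cancel:
  assumes "c \<noteq> 0"
  shows "ideal_mult D (smult_set c I) (smult_set (1 / c) J) = ideal_mult D I J"
proof -
  have "{x * y |x y. x \<in> smult_set c I \<and> y \<in> smult_set (1 / c) J} = {x * y |x y. x \<in> I \<and> y \<in> J}"
  proof (intro set_eqI iffI)
    fix z assume "z \<in> {x * y |x y. x \<in> smult_set c I \<and> y \<in> smult_set (1 / c) J}"
    then obtain x y where "x \<in> smult_set c I" "y \<in> smult_set (1 / c) J" "z = x * y" by blast
    then obtain i j where "i \<in> I" "j \<in> J" "z = (c * i) * ((1 / c) * j)" unfolding smult_set_def by blast
    moreover have "(c * i) * ((1 / c) * j) = i * j" using assms by simp
    ultimately show "z \<in> {x * y |x y. x \<in> I \<and> y \<in> J}"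
      by (intro CollectI exI[of _ i] exI[of _ j]) simp
  next
    fix z assume "z \<in> {x * y |x y. x \<in> I \<and> y \<in> J}"
    then obtain i j where ij: "i \<in> I" "j \<in> J" "z = i * j" by blast
    have "c * i \<in> smult_set c I" "(1 / c) * j \<in> smult_set (1 / c) J" using ij unfolding smult_set_def by auto
    moreover have "z = (c * i) * ((1 / c) * j)" using assms ij(3) by simp
    ultimately show "z \<in> {x * y |x y. x \<in> smult_set c I \<and> y \<in> smult_set (1 / c) J}"
      by (intro CollectI exI[of _ "c * i"] exI[of _ "(1 / c) * j"]) simp
  qed
  then show ?thesis unfolding ideal_mult_def by simp
qed

lemma sinv_smult:
  assumes "star_invertible D st I" "c \<noteq> 0"
  shows "star_invertible D st (smult_set c I)"
  using assms(1) unfolding star_invertible_def smult_inv[OF assms(2)] im_smult_cancel[OF assms(2)] .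

lemma sideal_smult:
  assumes "domain_with_qf D" "star_op D st" "star_ideal D st I" "c \<noteq> 0"
  shows "star_ideal D st (smult_set c I)"
proof -
  have fi: "frac_ideal D I" "st I = I" using assms(3) unfolding star_ideal_def by auto
  show ?thesis unfolding star_ideal_def
    using fi_smult[OF assms(1) fi(1) assms(4)] st_smult[OF assms(2,4) fi(1)] fi(2) by simp
qed

lemma field_case:
  assumes "domain_with_qf D" "\<forall>x\<in>D. x \<noteq> 0 \<longrightarrow> is_unit_in D x" "frac_ideal D I"
  shows "is_principal D I"
proof -
  have U: "\<And>z. z \<in> D"
  proof -
    fix z :: 'a
    obtain a b where ab: "a \<in> D" "b \<in> D" "b \<noteq> 0" "z = a / b" using dq(6)[OF assms(1)] by blast
    obtain w where w: "w \<in> D" "b * w = 1" using assms(2) ab(2,3) unfolding is_unit_in_def by blast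
    have "w = 1 / b" using w(2) ab(3) by (simp add: eq_divide_eq mult.commute)
    then have "z = a * w" using ab(4) by simp
    then show "z \<in> D" using dq(5)[OF assms(1) ab(1) w(1)] by simp
  qed
  obtain a where a: "a \<in> I" "a \<noteq> 0" using fi_nz[OF assms(3)] by blast
  have "I = principal D 1"
  proof
    show "I \<subseteq> principal D 1" unfolding principal_1 using U by blast
    show "principal D 1 \<subseteq> I"
    proof
      fix z
      have sm: "is_submodule D I" using assms(3) unfolding frac_ideal_def by (elim conjE)
      have m: "\<forall>d\<in>D. \<forall>x\<in>I. d * x \<in> I" using sm unfolding is_submodule_def by (elim conjE) assumption
      have "(z / a) * a \<in> I" using m U[of "z / a"] a(1) by blast
      then show "z \<in> I" using a(2) by simp
    qed
  qed
  then show ?thesis unfolding is_principal_def by (intro exI[of _ 1]) simp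
qed

lemma factor_inv:
  assumes "domain_with_qf D" "star_op D st" "frac_ideal D I" "frac_ideal D J" "x \<noteq> 0"
    "st (ideal_mult D I J) = principal D x"
  shows "star_invertible D st I"
proof -
  let ?M = "ideal_mult D I J"
  have fM: "frac_ideal D ?M" by (rule fi_mult[OF assms(1,3,4)])
  have Mx: "?M \<subseteq> principal D x" using st_ext[OF assms(2) fM] assms(6) by simp
  have fIi: "frac_ideal D (frac_inverse D I)" by (rule fi_inv[OF assms(1,3)])
  have fP: "frac_ideal D (ideal_mult D I (frac_inverse D I))" by (rule fi_mult[OF assms(1,3) fIi])
  have sub1: "ideal_mult D I (frac_inverse D I) \<subseteq> D"
  proof (rule gens_mult_sub[OF assms(1) sub_D[OF assms(1)]], intro ballI)
    fix a u assume "a \<in> I" "u \<in> frac_inverse D I"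
    then show "a * u \<in> D" unfolding frac_inverse_def by (simp add: mult.commute)
  qed
  have le: "st (ideal_mult D I (frac_inverse D I)) \<subseteq> D"
    using st_mono[OF assms(2) fP fi_D[OF assms(1)] sub1] st_D[OF assms(2)] by simp
  have sub2: "smult_set (1 / x) ?M \<subseteq> ideal_mult D I (frac_inverse D I)"
  proof -
    have "?M \<subseteq> {z. (1 / x) * z \<in> ideal_mult D I (frac_inverse D I)}"
    proof (rule gens_mult_sub[OF assms(1) sub_pre[OF im_sub[OF assms(1)]]], intro ballI)
      fix a b assume ab: "a \<in> I" "b \<in> J"
      have "b / x \<in> frac_inverse D I" unfolding frac_inverse_def
      proof (rule CollectI, rule ballI)
        fix i assume "i \<in> I"
        have "i * b \<in> ?M" by (rule im_mem[OF assms(1) \<open>i \<in> I\<close> ab(2)])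
        then have "i * b \<in> principal D x" using Mx by blast
        then obtain d where d: "d \<in> D" "i * b = x * d" unfolding principal_def by blast
        have "b / x * i = d" using d(2) assms(5) by (simp add: field_simps)
        then show "b / x * i \<in> D" using d(1) by simp
      qed
      then have "a * (b / x) \<in> ideal_mult D I (frac_inverse D I)" by (rule im_mem[OF assms(1) ab(1)])
      then show "a * b \<in> {z. 1 / x * z \<in> ideal_mult D I (frac_inverse D I)}" by simp
    qed
    then show ?thesis unfolding smult_set_def by blast
  qed
  have "D = smult_set (1 / x) (principal D x)" unfolding smult_principal using assms(5) principal_1[of D] by simp
  also have "\<dots> = st (smult_set (1 / x) ?M)" using st_smult[OF assms(2) _ fM, of "1 / x"] assms(5,6) by simp
  also have "\<dots> \<subseteq> st (ideal_mult D I (frac_inverse D I))"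
    by (rule st_mono[OF assms(2) fi_smult[OF assms(1) fM] fP sub2]) (use assms(5) in simp)
  finally show ?thesis unfolding star_invertible_def using le by blast
qed

lemma fi_prod:
  assumes "domain_with_qf D" "\<forall>I\<in>set Is. frac_ideal D I"
  shows "frac_ideal D (ideal_prod_list D Is)"
  using assms(2)
  by (induction Is) (auto simp: ideal_prod_list_def fi_D[OF assms(1)] intro: fi_mult[OF assms(1)])

lemma prod_factor:
  assumes "domain_with_qf D" "\<forall>I\<in>set Is. frac_ideal D I" "I \<in> set Is"
  shows "\<exists>Q. frac_ideal D Q \<and> ideal_prod_list D Is = ideal_mult D I Q"
  using assms(2,3)
proof (induction Is)
  case Nil then show ?case by simp
next
  case (Cons J Is)
  have e: "ideal_prod_list D (J # Is) = ideal_mult D J (ideal_prod_list D Is)"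
    unfolding ideal_prod_list_def by simp
  show ?case
  proof (cases "I = J")
    case True
    then show ?thesis using e fi_prod[OF assms(1), of Is] Cons.prems by auto
  next
    case False
    then have "I \<in> set Is" using Cons.prems by simp
    then obtain Q where Q: "frac_ideal D Q" "ideal_prod_list D Is = ideal_mult D I Q" using Cons by auto
    have "ideal_prod_list D (J # Is) = ideal_mult D (ideal_mult D J I) Q" using e Q(2) im_assoc[OF assms(1)] by simp
    also have "\<dots> = ideal_mult D I (ideal_mult D J Q)" using im_comm[of D J I] im_assoc[OF assms(1)] by simp
    finally show ?thesis using fi_mult[OF assms(1) _ Q(1), of J] Cons.prems by auto
  qed
qed

lemma principal_unit:
  assumes "domain_with_qf D" "u \<in> D" "v \<in> D" "u * v = 1"
  shows "principal D (y * u) = principal D y"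
proof
  show "principal D (y * u) \<subseteq> principal D y"
  proof
    fix z assume "z \<in> principal D (y * u)"
    then obtain d where "d \<in> D" "z = y * u * d" unfolding principal_def by blast
    then show "z \<in> principal D y" unfolding principal_def using dq(5)[OF assms(1) assms(2)]
      by (intro CollectI exI[of _ "u * d"]) (simp add: ac_simps)
  qed
  show "principal D y \<subseteq> principal D (y * u)"
  proof
    fix z assume "z \<in> principal D y"
    then obtain d where "d \<in> D" "z = y * d" unfolding principal_def by blast
    moreover have "y * d = y * u * (v * d)" using assms(4) by (simp add: ac_simps)
    ultimately show "z \<in> principal D (y * u)" unfolding principal_def using dq(5)[OF assms(1) assms(3)]
      by (intro CollectI exI[of _ "v * d"]) simp
  qed
qed


lemma homog_parts:
  assumes "star_homog D st I"
  shows "star_ideal D st I" "frac_ideal D I" "I \<subseteq> D"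
  using assms unfolding star_homog_def pift_def star_ideal_def by auto

lemma wf_from_homog:
  assumes "star_class_group_trivial D st" "star_homog D st (principal D y)"
  shows "star_wf_homog_elem D st y"
  using assms unfolding star_wf_homog_elem_def star_wf_homog_def star_class_group_trivial_def by blast

lemma wf_elem_homog: "star_wf_homog_elem D st y \<Longrightarrow> star_homog D st (principal D y)"
  unfolding star_wf_homog_elem_def star_wf_homog_def by blast

lemma wf_get:
  assumes "star_wf_SH D st" "x \<in> D" "x \<noteq> 0" "\<not> is_unit_in D x"
  obtains xs where "\<forall>y\<in>set xs. y \<in> D \<and> star_wf_homog_elem D st y" "x = prod_list xs"
  using assms unfolding star_wf_SH_def by blast

lemma sh_get:
  assumes "star_SH D st" "x \<in> D" "x \<noteq> 0" "\<not> is_unit_in D x"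
  obtains Is where "\<forall>I\<in>set Is. star_homog D st I" "principal D x = st (ideal_prod_list D Is)"
  using assms unfolding star_SH_def by blast

theorem mainTheorem17:
  fixes D :: "'a::field set" and st :: "'a set \<Rightarrow> 'a set"
  assumes "domain_with_qf D"
    and "star_op D st"
    and "finite_character D st"
  shows "star_wf_SH D st \<longleftrightarrow> (star_SH D st \<and> star_class_group_trivial D st)"
proof -
  note dom = assms(1) and so = assms(2)
  have unit1: "is_unit_in D 1" unfolding is_unit_in_def using dq(2)[OF dom] by force
  have one: "star_wf_SH D st \<Longrightarrow> star_SH D st"
  proof -
    assume wf: "star_wf_SH D st"
    show "star_SH D st" unfolding star_SH_def
    proof (intro ballI impI)
      fix x assume x: "x \<in> D" "x \<noteq> 0" "\<not> is_unit_in D x"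
      obtain xs where xs: "\<forall>y\<in>set xs. y \<in> D \<and> star_wf_homog_elem D st y" "x = prod_list xs"
        using wf_get[OF wf x] by blast
      show "\<exists>Is. (\<forall>I\<in>set Is. star_homog D st I) \<and> principal D x = st (ideal_prod_list D Is)"
      proof (intro exI[of _ "map (principal D) xs"] conjI)
        show "\<forall>I\<in>set (map (principal D) xs). star_homog D st I"
          using xs(1) wf_elem_homog by auto
        show "principal D x = st (ideal_prod_list D (map (principal D) xs))"
          unfolding prod_principal[OF dom] xs(2)[symmetric] using st_principal[OF so x(2)] by simp
      qed
    qed
  qed
  have two: "star_wf_SH D st \<Longrightarrow> star_class_group_trivial D st"
  proof -
    assume wf: "star_wf_SH D st"
    show "star_class_group_trivial D st" unfolding star_class_group_trivial_def
    proof (intro allI impI)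
      fix I assume I: "star_ideal D st I \<and> star_invertible D st I"
      have fI: "frac_ideal D I" using I unfolding star_ideal_def by simp
      show "is_principal D I"
      proof (cases "\<forall>x\<in>D. x \<noteq> 0 \<longrightarrow> is_unit_in D x")
        case True
        then show ?thesis using field_case[OF dom True fI] by simp
      next
        case False
        then obtain x where x: "x \<in> D" "x \<noteq> 0" "\<not> is_unit_in D x" by blast
        obtain xs where xs: "\<forall>y\<in>set xs. y \<in> D \<and> star_wf_homog_elem D st y" "x = prod_list xs"
          using wf_get[OF wf x] by blast
        have "xs \<noteq> []" using xs(2) x(3) unit1 by auto
        then obtain y where y: "y \<in> set xs" by (cases xs) auto
        have yD: "y \<in> D" and ywf: "star_wf_homog_elem D st y" using xs(1) y by auto
        have y0: "y \<noteq> 0" using x(2) xs(2) y prod_list_zero_iff by metis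
        have key: "\<And>J. star_ideal D st J \<Longrightarrow> star_invertible D st J \<Longrightarrow> principal D y \<subseteq> J \<Longrightarrow> is_principal D J"
          using ywf inv_principal[OF dom so y0] unfolding star_wf_homog_elem_def star_wf_homog_def by blast
        obtain a where a: "a \<in> I" "a \<noteq> 0" using fi_nz[OF fI] by blast
        let ?J = "smult_set (y / a) I"
        have c0: "y / a \<noteq> 0" using y0 a(2) by simp
        have sJ: "star_ideal D st ?J" using sideal_smult[OF dom so _ c0] I by blast
        have iJ: "star_invertible D st ?J" using sinv_smult[OF _ c0] I by blast
        have sub: "principal D y \<subseteq> ?J"
        proof
          fix z assume "z \<in> principal D y"
          then obtain d where d: "d \<in> D" "z = y * d" unfolding principal_def by blast
          have m: "\<forall>d\<in>D. \<forall>x\<in>I. d * x \<in> I" using fI unfolding frac_ideal_def is_submodule_def by (elim conjE) assumption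
          have "d * a \<in> I" using m d(1) a(1) by blast
          moreover have "z = (y / a) * (d * a)" using d(2) a(2) by simp
          ultimately show "z \<in> ?J" unfolding smult_set_def by blast
        qed
        obtain b where b: "b \<noteq> 0" "?J = principal D b" using key[OF sJ iJ sub] unfolding is_principal_def by blast
        have "I = smult_set (a / y) ?J" unfolding smult_smult using a(2) y0 by (simp add: smult_1)
        also have "\<dots> = principal D ((a / y) * b)" unfolding b(2) smult_principal ..
        finally show ?thesis unfolding is_principal_def using a(2) y0 b(1) by (intro exI[of _ "(a / y) * b"]) simp
      qed
    qed
  qed
  have three: "star_SH D st \<Longrightarrow> star_class_group_trivial D st \<Longrightarrow> star_wf_SH D st"
  proof -
    assume sh: "star_SH D st" and cl: "star_class_group_trivial D st"
    show "star_wf_SH D st" unfolding star_wf_SH_def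
    proof (intro ballI impI)
      fix x assume x: "x \<in> D" "x \<noteq> 0" "\<not> is_unit_in D x"
      obtain Is where Is: "\<forall>I\<in>set Is. star_homog D st I" "principal D x = st (ideal_prod_list D Is)"
        using sh_get[OF sh x] by blast
      have fIs: "\<forall>I\<in>set Is. frac_ideal D I" using Is(1) homog_parts(2) by blast
      have pr: "\<And>I. I \<in> set Is \<Longrightarrow> \<exists>y. y \<noteq> 0 \<and> I = principal D y"
      proof -
        fix I assume I: "I \<in> set Is"
        obtain Q where Q: "frac_ideal D Q" "ideal_prod_list D Is = ideal_mult D I Q"
          using prod_factor[OF dom fIs I] by blast
        have "star_invertible D st I"
          using factor_inv[OF dom so _ Q(1) x(2)] fIs I Is(2) Q(2) by metis
        moreover have "star_ideal D st I" using Is(1) I homog_parts(1) by blast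
        ultimately show "\<exists>y. y \<noteq> 0 \<and> I = principal D y" using cl
          unfolding star_class_group_trivial_def is_principal_def by blast
      qed
      define g where "g I = (SOME y. y \<noteq> 0 \<and> I = principal D y)" for I
      have g: "\<And>I. I \<in> set Is \<Longrightarrow> g I \<noteq> 0 \<and> I = principal D (g I)"
        unfolding g_def using pr by (rule someI_ex)
      define ys where "ys = map g Is"
      have Isys: "map (principal D) ys = Is" unfolding ys_def map_map
        by (rule map_idI) (use g in auto)
      have ys0: "0 \<notin> set ys" unfolding ys_def using g by auto
      have ysD: "\<forall>y\<in>set ys. y \<in> D \<and> star_wf_homog_elem D st y"
      proof
        fix y assume "y \<in> set ys"
        then obtain I where I: "I \<in> set Is" "y = g I" unfolding ys_def by auto
        have e: "principal D y = I" using g[OF I(1)] I(2) by simp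
        have "y \<in> D" using principal_mem[OF dom, of y] e homog_parts(3) Is(1) I(1) by blast
        moreover have "star_wf_homog_elem D st y" using wf_from_homog[OF cl] e Is(1) I(1) by simp
        ultimately show "y \<in> D \<and> star_wf_homog_elem D st y" ..
      qed
      let ?p = "prod_list ys"
      have p0: "?p \<noteq> 0" using ys0 prod_list_zero_iff by metis
      have xp: "principal D x = principal D ?p"
        using Is(2) Isys prod_principal[OF dom, of ys] st_principal[OF so p0] by simp
      obtain u where u: "u \<in> D" "x = ?p * u"
        using principal_mem[OF dom, of x] xp unfolding principal_def by blast
      obtain v where v: "v \<in> D" "?p = x * v"
        using principal_mem[OF dom, of ?p] xp unfolding principal_def by blast
      have uv: "u * v = 1" using u(2) v(2) x(2) by (metis mult.assoc mult.commute mult_cancel_left1)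
      have "ys \<noteq> []"
      proof
        assume "ys = []"
        then have "1 = x * v" using v(2) by simp
        then show False using x(3) v(1) unfolding is_unit_in_def by metis
      qed
      then obtain y0 ys' where yy: "ys = y0 # ys'" by (cases ys) auto
      show "\<exists>xs. (\<forall>y\<in>set xs. y \<in> D \<and> star_wf_homog_elem D st y) \<and> x = prod_list xs"
      proof (intro exI[of _ "(y0 * u) # ys'"] conjI)
        have y0: "y0 \<in> D" "star_wf_homog_elem D st y0" using ysD yy by auto
        have "y0 * u \<in> D" using dq(5)[OF dom y0(1) u(1)] .
        moreover have "star_wf_homog_elem D st (y0 * u)"
          using y0(2) principal_unit[OF dom u(1) v(1) uv, of y0] unfolding star_wf_homog_elem_def by simp
        ultimately show "\<forall>y\<in>set ((y0 * u) # ys'). y \<in> D \<and> star_wf_homog_elem D st y"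
          using ysD yy by auto
        show "x = prod_list ((y0 * u) # ys')" using u(2) yy by (simp add: ac_simps)
      qed
    qed
  qed
  show ?thesis using one two three by blast
qed

end
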